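(* There is an absolute constant $C$ such that the following holds. For $i\in\{1,2,3,4\}$ and $j\in\{1,2,3\}$ write $i\subset j$ if $i=j$, or if $i=4$ and $j=3$; write $i\not\subset j$ otherwise. Let $I_1,\dots,I_4\subset\mathbb{R}$ be intervals, let $\tau,\alpha,\beta>0$, and let $h_1,h_2,h_3:\mathbb{R}\to\mathbb{C}$ be measurable functions satisfying $$\int_{I_i}|h_j|\le\alpha\quad\text{whenever } i\subset j,$$ and, whenever $i\not\subset j$, $h_j$ is $C^2$ on $I_i+[-\tau,\tau]$ with $|h_j(x)|=1$, $|h_j'(x)|\le\beta$, $|h_j''(x)|\le\beta^2$ for all $x\in I_i+[-\tau,\tau]$ (Minkowski set addition). Let $t_1,t_2$ be independent random variables uniformly distributed on $[0,\tau]$, let $t_3=t_4=0$, and set $f(x)=f_{t_1,t_2}(x):=h_1(x-t_1)h_2(x-t_2)h_3(x)$. Then for every real $m\ne0$, $$\left|\mathbb{E}\Big(\prod_{i=1}^{4}\int_{I_i+t_i}f(x_i)e^{-imx_i}\,dx_i\Big)\right|\le C\frac{\alpha^4}{m^2}\Big(\max\big(\beta,\tfrac1\tau\big)\Big)^2.$$ *)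

theory Defs
  imports "HOL-Probability.Probability"
begin

definition idx_sub :: "nat \<Rightarrow> nat \<Rightarrow> bool" where
  "idx_sub i j \<longleftrightarrow> i = j \<or> (i = 4 \<and> j = 3)"

definition thicken :: "real set \<Rightarrow> real \<Rightarrow> real set" where
  "thicken I \<tau> = {x + s | x s. x \<in> I \<and> s \<in> {-\<tau>..\<tau>}}"

definition C2_unimod_on :: "(real \<Rightarrow> complex) \<Rightarrow> real set \<Rightarrow> real \<Rightarrow> bool" where
  "C2_unimod_on h S \<beta> \<longleftrightarrow>
     (\<exists>h' h''. continuous_on S h'' \<and>
       (\<forall>x\<in>S. (h has_vector_derivative h' x) (at x within S)
             \<and> (h' has_vector_derivative h'' x) (at x within S)
             \<and> norm (h x) = 1 \<and> norm (h' x) \<le> \<beta> \<and> norm (h'' x) \<le> \<beta>\<^sup>2))"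

definition tshift :: "real \<Rightarrow> real \<Rightarrow> nat \<Rightarrow> real" where
  "tshift t1 t2 i = (if i = 1 then t1 else if i = 2 then t2 else 0)"

definition fprod :: "(nat \<Rightarrow> real \<Rightarrow> complex) \<Rightarrow> real \<Rightarrow> real \<Rightarrow> real \<Rightarrow> complex" where
  "fprod h t1 t2 x = h 1 (x - t1) * h 2 (x - t2) * h 3 x"

end

theory Submission
  imports Defs
begin

lemma lin_aux:
  fixes a b c d f i :: complex
  assumes "i = a + b" "i = - c - d" "f = a - d"
  shows "2 * i = f + b - c"
proof -
  have "2 * i = i + i" by simp
  also have "\<dots> = (a + b) + (- c - d)" using assms(1,2) by simp
  also have "\<dots> = f + b - c" using assms(3) by simp
  finally show ?thesis .
qed

lemma osc1:
  fixes u :: "real \<Rightarrow> complex" and \<tau> m A L :: real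
  assumes tau: "\<tau> > 0" and m: "m \<noteq> 0" and L: "L \<ge> 0"
    and bnd: "\<And>t. t \<in> {0..\<tau>} \<Longrightarrow> norm (u t) \<le> A"
    and lip: "\<And>s t. s \<in> {0..\<tau>} \<Longrightarrow> t \<in> {0..\<tau>} \<Longrightarrow> norm (u s - u t) \<le> L * \<bar>s - t\<bar>"
  shows "norm (integral {0..\<tau>} (\<lambda>t. exp (- \<i> * complex_of_real (m * t)) * u t))
          \<le> pi / \<bar>m\<bar> * (A + \<tau> * L / 2)"
proof -
  define e where "e = (\<lambda>t::real. exp (- \<i> * complex_of_real (m * t)))"
  define \<delta> where "\<delta> = pi / \<bar>m\<bar>"
  have dpos: "\<delta> > 0" using m by (simp add: \<delta>_def)
  have A0: "A \<ge> 0" using bnd[of 0] tau by (auto intro: order_trans[OF norm_ge_zero])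
  have ne: "\<And>t. norm (e t) = 1" by (simp add: e_def)
  have ce: "continuous_on S e" for S unfolding e_def by (intro continuous_intros)
  have cu: "continuous_on {0..\<tau>} u"
  proof -
    have "L-lipschitz_on {0..\<tau>} u"
      by (rule lipschitz_onI) (use lip L in \<open>auto simp: dist_norm\<close>)
    then show ?thesis by (rule lipschitz_on_continuous_on)
  qed
  have "norm (integral {0..\<tau>} (\<lambda>t. e t * u t)) \<le> \<delta> * (A + \<tau> * L / 2)"
  proof (cases "\<tau> \<le> \<delta>")
    case True
    have "norm (integral {0..\<tau>} (\<lambda>t. e t * u t)) \<le> A * (\<tau> - 0)"
    proof (rule integral_bound)
      show "continuous_on {0..\<tau>} (\<lambda>t. e t * u t)" by (intro continuous_on_mult ce cu)
      fix t assume "t \<in> {0..\<tau>}" then show "norm (e t * u t) \<le> A" using bnd by (simp add: norm_mult ne)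
    qed (use tau in auto)
    also have "\<dots> \<le> \<delta> * (A + \<tau> * L / 2)"
    proof -
      have "A * \<tau> \<le> A * \<delta>" using True A0 by (simp add: mult_left_mono)
      moreover have "0 \<le> \<delta> * (\<tau> * L / 2)" using dpos tau L by simp
      ultimately show ?thesis by (simp add: distrib_left mult.commute)
    qed
    finally show ?thesis .
  next
    case False
    define k where "k = (\<lambda>t. e t * u t)"
    define v where "v = (\<lambda>s. e s * u (s + \<delta>))"
    have esh: "e (s + \<delta>) = - e s" for s
    proof -
      have "m * \<delta> = pi \<or> m * \<delta> = - pi" using m by (auto simp: \<delta>_def abs_if)
      moreover have "exp (- \<i> * complex_of_real pi) = -1" "exp (\<i> * complex_of_real pi) = -1"
        using exp_pi_i by (auto simp: mult.commute exp_minus)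
      ultimately have "exp (- \<i> * complex_of_real (m * \<delta>)) = -1" by (auto simp del: of_real_mult)
      moreover have "- \<i> * complex_of_real (m * (s + \<delta>)) = - \<i> * complex_of_real (m * \<delta>) + - \<i> * complex_of_real (m * s)"
        by (simp add: algebra_simps)
      ultimately show ?thesis
        unfolding e_def by (simp only: exp_add) simp
    qed
    have ck: "continuous_on {0..\<tau>} k" unfolding k_def by (intro continuous_intros ce cu)
    have cv: "continuous_on {-\<delta>..\<tau>-\<delta>} v"
    proof -
      have "continuous_on {-\<delta>..\<tau>-\<delta>} (\<lambda>s. u (s + \<delta>))"
        by (rule continuous_on_compose2[OF cu]) (auto intro!: continuous_intros)
      then show ?thesis unfolding v_def by (intro continuous_intros ce)
    qed
    have I1: "integral {0..\<tau>} k = integral {0..\<tau>-\<delta>} k + integral {\<tau>-\<delta>..\<tau>} k"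
      using False dpos by (intro Henstock_Kurzweil_Integration.integral_combine[symmetric] integrable_continuous_interval ck) auto
    have "integral {-\<delta>..\<tau>-\<delta>} (k \<circ> (+) \<delta>) = integral {-\<delta>+\<delta>..\<tau>-\<delta>+\<delta>} k"
      by (rule integral_shift_Icc_real)
    moreover have "k \<circ> (+) \<delta> = (\<lambda>s. - v s)"
      by (rule ext) (simp add: k_def v_def esh add.commute[of \<delta>])
    ultimately have "integral {0..\<tau>} k = - integral {-\<delta>..\<tau>-\<delta>} v"
      by (simp add: integral_neg)
    also have "integral {-\<delta>..\<tau>-\<delta>} v = integral {-\<delta>..0} v + integral {0..\<tau>-\<delta>} v"
      using False dpos by (intro Henstock_Kurzweil_Integration.integral_combine[symmetric] integrable_continuous_interval cv) auto
    finally have I2: "integral {0..\<tau>} k = - integral {-\<delta>..0} v - integral {0..\<tau>-\<delta>} v" by simp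
    have "2 * integral {0..\<tau>} k = integral {0..\<tau>-\<delta>} (\<lambda>s. k s - v s) + integral {\<tau>-\<delta>..\<tau>} k - integral {-\<delta>..0} v"
    proof -
      have "integral {0..\<tau>-\<delta>} (\<lambda>s. k s - v s) = integral {0..\<tau>-\<delta>} k - integral {0..\<tau>-\<delta>} v"
        apply (rule integral_diff)
         apply (rule integrable_continuous_interval, rule continuous_on_subset[OF ck]) using dpos apply auto[1]
        apply (rule integrable_continuous_interval, rule continuous_on_subset[OF cv]) using dpos apply auto[1]
        done
      then show ?thesis using I1 I2 by (intro lin_aux) auto
    qed
    have b1: "norm (integral {0..\<tau>-\<delta>} (\<lambda>s. k s - v s)) \<le> (L * \<delta>) * (\<tau> - \<delta> - 0)"
    proof (rule integral_bound)
      show "0 \<le> \<tau> - \<delta>" using False by simp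
      show "continuous_on {0..\<tau> - \<delta>} (\<lambda>s. k s - v s)"
        by (intro continuous_intros continuous_on_subset[OF ck] continuous_on_subset[OF cv]) (use dpos in auto)
      fix t assume t: "t \<in> {0..\<tau>-\<delta>}"
      have "k t - v t = e t * (u t - u (t + \<delta>))" by (simp add: k_def v_def algebra_simps)
      moreover have "norm (u t - u (t + \<delta>)) \<le> L * \<bar>t - (t + \<delta>)\<bar>" using t dpos by (intro lip) auto
      ultimately show "norm (k t - v t) \<le> L * \<delta>" using dpos by (simp add: norm_mult ne)
    qed
    have b2: "norm (integral {\<tau>-\<delta>..\<tau>} k) \<le> A * (\<tau> - (\<tau> - \<delta>))"
    proof (rule integral_bound)
      show "continuous_on {\<tau> - \<delta>..\<tau>} k" by (rule continuous_on_subset[OF ck]) (use dpos False in auto)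
      fix t assume "t \<in> {\<tau> - \<delta>..\<tau>}" then show "norm (k t) \<le> A"
        using bnd[of t] dpos False by (simp add: k_def norm_mult ne)
    qed (use dpos in auto)
    have b3: "norm (integral {-\<delta>..0} v) \<le> A * (0 - - \<delta>)"
    proof (rule integral_bound)
      show "continuous_on {-\<delta>..0} v" by (rule continuous_on_subset[OF cv]) (use dpos False in auto)
      fix t assume "t \<in> {-\<delta>..0}" then show "norm (v t) \<le> A"
        using bnd[of "t + \<delta>"] dpos False by (simp add: v_def norm_mult ne)
    qed (use dpos in auto)
    have "2 * norm (integral {0..\<tau>} k) \<le> L * \<delta> * (\<tau> - \<delta>) + A * \<delta> + A * \<delta>"
    proof -
      have "2 * norm (integral {0..\<tau>} k) = norm (2 * integral {0..\<tau>} k)" by (simp add: norm_mult)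
      also have "\<dots> \<le> norm (integral {0..\<tau>-\<delta>} (\<lambda>s. k s - v s)) + norm (integral {\<tau>-\<delta>..\<tau>} k) + norm (integral {-\<delta>..0} v)"
        unfolding \<open>2 * integral {0..\<tau>} k = _\<close>
        by (rule order_trans[OF norm_triangle_ineq4]) (simp add: norm_triangle_ineq)
      finally show ?thesis using b1 b2 b3 by simp
    qed
    then show ?thesis unfolding k_def
    proof -
      have "L * \<delta> * (\<tau> - \<delta>) \<le> L * \<delta> * \<tau>" using dpos L by (simp add: mult_left_mono)
      then show ?thesis using \<open>2 * norm (integral {0..\<tau>} k) \<le> _\<close> unfolding k_def[symmetric] by (simp add: algebra_simps)
    qed
  qed
  then show ?thesis unfolding e_def \<delta>_def .
qed

definition nice :: "real \<Rightarrow> real \<Rightarrow> (real \<Rightarrow> real \<Rightarrow> complex) \<Rightarrow> bool" where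
  "nice \<tau> L G \<longleftrightarrow> 0 \<le> L \<and>
    (\<forall>a\<in>{0..\<tau>}. \<forall>s\<in>{0..\<tau>}. norm (G a s) \<le> 1) \<and>
    (\<forall>a\<in>{0..\<tau>}. \<forall>a'\<in>{0..\<tau>}. \<forall>s\<in>{0..\<tau>}. norm (G a s - G a' s) \<le> L * \<bar>a - a'\<bar>) \<and>
    (\<forall>a\<in>{0..\<tau>}. \<forall>s\<in>{0..\<tau>}. \<forall>s'\<in>{0..\<tau>}. norm (G a s - G a s') \<le> L * \<bar>s - s'\<bar>) \<and>
    (\<forall>a\<in>{0..\<tau>}. \<forall>a'\<in>{0..\<tau>}. \<forall>s\<in>{0..\<tau>}. \<forall>s'\<in>{0..\<tau>}.
       norm (G a s - G a' s - G a s' + G a' s') \<le> L\<^sup>2 * \<bar>a - a'\<bar> * \<bar>s - s'\<bar>)"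

lemma prod_mixed_identity:
  fixes F00 F10 F01 F11 G00 G10 G01 G11 :: complex
  shows "F00 * G00 - F10 * G10 - F01 * G01 + F11 * G11 =
    (F00 - F10 - F01 + F11) * G10 + F01 * (G00 - G10 - G01 + G11) + (F11 - F01) * (G11 - G10) + (F01 - F00) * (G10 - G00)"
  by (simp add: algebra_simps)

lemma nice_mult:
  assumes F: "nice \<tau> L1 F" and G: "nice \<tau> L2 G"
  shows "nice \<tau> (L1 + L2) (\<lambda>a s. F a s * G a s)"
proof -
  have L1: "0 \<le> L1" and L2: "0 \<le> L2" using F G by (auto simp: nice_def)
  have Fb: "\<And>a s. a \<in> {0..\<tau>} \<Longrightarrow> s \<in> {0..\<tau>} \<Longrightarrow> norm (F a s) \<le> 1" using F by (auto simp: nice_def)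
  have Gb: "\<And>a s. a \<in> {0..\<tau>} \<Longrightarrow> s \<in> {0..\<tau>} \<Longrightarrow> norm (G a s) \<le> 1" using G by (auto simp: nice_def)
  have F1: "\<And>a a' s. a \<in> {0..\<tau>} \<Longrightarrow> a' \<in> {0..\<tau>} \<Longrightarrow> s \<in> {0..\<tau>} \<Longrightarrow> norm (F a s - F a' s) \<le> L1 * \<bar>a - a'\<bar>"
    using F unfolding nice_def by blast
  have G1: "\<And>a a' s. a \<in> {0..\<tau>} \<Longrightarrow> a' \<in> {0..\<tau>} \<Longrightarrow> s \<in> {0..\<tau>} \<Longrightarrow> norm (G a s - G a' s) \<le> L2 * \<bar>a - a'\<bar>"
    using G unfolding nice_def by blast
  have F2: "\<And>a s s'. a \<in> {0..\<tau>} \<Longrightarrow> s \<in> {0..\<tau>} \<Longrightarrow> s' \<in> {0..\<tau>} \<Longrightarrow> norm (F a s - F a s') \<le> L1 * \<bar>s - s'\<bar>"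
    using F unfolding nice_def by blast
  have G2: "\<And>a s s'. a \<in> {0..\<tau>} \<Longrightarrow> s \<in> {0..\<tau>} \<Longrightarrow> s' \<in> {0..\<tau>} \<Longrightarrow> norm (G a s - G a s') \<le> L2 * \<bar>s - s'\<bar>"
    using G unfolding nice_def by blast
  have F3: "\<And>a a' s s'. a \<in> {0..\<tau>} \<Longrightarrow> a' \<in> {0..\<tau>} \<Longrightarrow> s \<in> {0..\<tau>} \<Longrightarrow> s' \<in> {0..\<tau>} \<Longrightarrow>
      norm (F a s - F a' s - F a s' + F a' s') \<le> L1\<^sup>2 * \<bar>a - a'\<bar> * \<bar>s - s'\<bar>"
    using F unfolding nice_def by blast
  have G3: "\<And>a a' s s'. a \<in> {0..\<tau>} \<Longrightarrow> a' \<in> {0..\<tau>} \<Longrightarrow> s \<in> {0..\<tau>} \<Longrightarrow> s' \<in> {0..\<tau>} \<Longrightarrow>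
      norm (G a s - G a' s - G a s' + G a' s') \<le> L2\<^sup>2 * \<bar>a - a'\<bar> * \<bar>s - s'\<bar>"
    using G unfolding nice_def by blast
  have P0: "norm (x * y) \<le> 1" if "norm x \<le> 1" "norm y \<le> 1" for x y :: complex
    using that by (simp add: norm_mult mult_le_one)
  have P1: "norm (x * y - x' * y') \<le> A + B" if "norm x \<le> 1" "norm y' \<le> 1" "norm (x - x') \<le> B" "norm (y - y') \<le> A"
    for x y x' y' :: complex and A B :: real
  proof -
    have "x * y - x' * y' = x * (y - y') + (x - x') * y'" by (simp add: algebra_simps)
    then have "norm (x * y - x' * y') \<le> norm x * norm (y - y') + norm (x - x') * norm y'"
      by (metis norm_mult norm_triangle_ineq)
    also have "\<dots> \<le> 1 * A + B * 1"
      using that by (intro add_mono mult_mono) (auto intro: order_trans[OF norm_ge_zero])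
    finally show ?thesis by simp
  qed
  show ?thesis unfolding nice_def
  proof (intro conjI ballI)
    show "0 \<le> L1 + L2" using L1 L2 by simp
    fix a s assume a: "a \<in> {0..\<tau>}" and s: "s \<in> {0..\<tau>}"
    show "norm (F a s * G a s) \<le> 1" using Fb[OF a s] Gb[OF a s] by (rule P0)
  next
    fix a a' s assume a: "a \<in> {0..\<tau>}" and a': "a' \<in> {0..\<tau>}" and s: "s \<in> {0..\<tau>}"
    have "norm (F a s * G a s - F a' s * G a' s) \<le> L2 * \<bar>a - a'\<bar> + L1 * \<bar>a - a'\<bar>"
      by (rule P1) (use Fb[OF a s] Gb[OF a' s] F1[OF a a' s] G1[OF a a' s] in auto)
    then show "norm (F a s * G a s - F a' s * G a' s) \<le> (L1 + L2) * \<bar>a - a'\<bar>" by (simp add: algebra_simps)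
  next
    fix a s s' assume a: "a \<in> {0..\<tau>}" and s: "s \<in> {0..\<tau>}" and s': "s' \<in> {0..\<tau>}"
    have "norm (F a s * G a s - F a s' * G a s') \<le> L2 * \<bar>s - s'\<bar> + L1 * \<bar>s - s'\<bar>"
      by (rule P1) (use Fb[OF a s] Gb[OF a s'] F2[OF a s s'] G2[OF a s s'] in auto)
    then show "norm (F a s * G a s - F a s' * G a s') \<le> (L1 + L2) * \<bar>s - s'\<bar>" by (simp add: algebra_simps)
  next
    fix a a' s s' assume a: "a \<in> {0..\<tau>}" and a': "a' \<in> {0..\<tau>}" and s: "s \<in> {0..\<tau>}" and s': "s' \<in> {0..\<tau>}"
    define da where "da = \<bar>a - a'\<bar>"
    define ds where "ds = \<bar>s - s'\<bar>"
    have da: "da \<ge> 0" and ds: "ds \<ge> 0" by (auto simp: da_def ds_def)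
    have t1: "norm ((F a s - F a' s - F a s' + F a' s') * G a' s) \<le> L1\<^sup>2 * da * ds"
    proof -
      have "norm (F a s - F a' s - F a s' + F a' s') * norm (G a' s) \<le> (L1\<^sup>2 * da * ds) * 1"
        by (rule mult_mono) (use F3[OF a a' s s'] Gb[OF a' s] da ds in \<open>auto simp: da_def ds_def\<close>)
      then show ?thesis by (simp add: norm_mult)
    qed
    have t2: "norm (F a s' * (G a s - G a' s - G a s' + G a' s')) \<le> L2\<^sup>2 * da * ds"
    proof -
      have "norm (F a s') * norm (G a s - G a' s - G a s' + G a' s') \<le> 1 * (L2\<^sup>2 * da * ds)"
        by (rule mult_mono) (use G3[OF a a' s s'] Fb[OF a s'] da ds in \<open>auto simp: da_def ds_def\<close>)
      then show ?thesis by (simp add: norm_mult)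
    qed
    have t3: "norm ((F a' s' - F a s') * (G a' s' - G a' s)) \<le> (L1 * da) * (L2 * ds)"
      unfolding norm_mult using F1[OF a' a s'] G2[OF a' s' s] da ds L1 L2
      by (intro mult_mono) (auto simp: da_def ds_def abs_minus_commute)
    have t4: "norm ((F a s' - F a s) * (G a' s - G a s)) \<le> (L1 * ds) * (L2 * da)"
      unfolding norm_mult using F2[OF a s' s] G1[OF a' a s] da ds L1 L2
      by (intro mult_mono) (auto simp: da_def ds_def abs_minus_commute)
    have "norm (F a s * G a s - F a' s * G a' s - F a s' * G a s' + F a' s' * G a' s')
       \<le> L1\<^sup>2 * da * ds + L2\<^sup>2 * da * ds + (L1 * da) * (L2 * ds) + (L1 * ds) * (L2 * da)"
      unfolding prod_mixed_identity
      by (rule order_trans[OF norm_triangle_ineq] order_trans[OF add_mono[OF norm_triangle_ineq order_refl]]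
          order_trans[OF add_mono[OF add_mono[OF norm_triangle_ineq order_refl] order_refl]]
          add_mono t1 t2 t3 t4)+
    also have "\<dots> = (L1 + L2)\<^sup>2 * da * ds" by (simp add: power2_eq_square algebra_simps)
    finally show "norm (F a s * G a s - F a' s * G a' s - F a s' * G a s' + F a' s' * G a' s')
       \<le> (L1 + L2)\<^sup>2 * \<bar>a - a'\<bar> * \<bar>s - s'\<bar>" by (simp add: da_def ds_def)
  qed
qed

lemma lip1:
  fixes \<psi> \<psi>' :: "real \<Rightarrow> complex"
  assumes S: "convex S"
    and d: "\<And>x. x \<in> S \<Longrightarrow> (\<psi> has_vector_derivative \<psi>' x) (at x within S)"
    and b: "\<And>x. x \<in> S \<Longrightarrow> norm (\<psi>' x) \<le> B"
    and x: "x \<in> S" and y: "y \<in> S"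
  shows "norm (\<psi> x - \<psi> y) \<le> B * \<bar>x - y\<bar>"
proof -
  have "norm (\<psi> x - \<psi> y) \<le> B * norm (x - y)"
  proof (rule differentiable_bound[OF S _ _ x y])
    fix z assume z: "z \<in> S"
    show "(\<psi> has_derivative (\<lambda>t. t *\<^sub>R \<psi>' z)) (at z within S)"
      using d[OF z] by (simp add: has_vector_derivative_def)
    have "onorm (\<lambda>t::real. t *\<^sub>R \<psi>' z) = onorm (\<lambda>t::real. t) * norm (\<psi>' z)"
      by (rule onorm_scaleR_left) (rule bounded_linear_ident)
    then show "onorm (\<lambda>t::real. t *\<^sub>R \<psi>' z) \<le> B" using b[OF z] by (simp add: onorm_id)
  qed
  then show ?thesis by simp
qed

lemma chain_affine:
  fixes \<psi> \<psi>' :: "real \<Rightarrow> complex"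
  assumes d: "\<And>x. x \<in> S \<Longrightarrow> (\<psi> has_vector_derivative \<psi>' x) (at x within S)"
    and sub: "\<And>t. t \<in> T \<Longrightarrow> c + k * t \<in> S" and t: "t \<in> T"
  shows "((\<lambda>t. \<psi> (c + k * t)) has_vector_derivative (k *\<^sub>R \<psi>' (c + k * t))) (at t within T)"
proof -
  have f: "((\<lambda>t. c + k * t) has_vector_derivative k) (at t within T)"
    by (auto intro!: derivative_eq_intros)
  have "(\<psi> has_vector_derivative \<psi>' (c + k * t)) (at (c + k * t) within (\<lambda>t. c + k * t) ` T)"
    by (rule has_vector_derivative_within_subset[OF d]) (use sub t in auto)
  from vector_diff_chain_within[OF f this] show ?thesis by (simp add: o_def)
qed

lemma nice_base:
  fixes \<psi> :: "real \<Rightarrow> complex"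
  assumes tau: "\<tau> > 0" and C2: "C2_unimod_on \<psi> S \<beta>" and S: "convex S" and beta: "\<beta> \<ge> 0"
    and p: "\<bar>p\<bar> \<le> 1" and q: "\<bar>q\<bar> \<le> 1"
    and sub: "\<And>a s. a \<in> {0..\<tau>} \<Longrightarrow> s \<in> {0..\<tau>} \<Longrightarrow> c + p * a + q * s \<in> S"
  shows "nice \<tau> \<beta> (\<lambda>a s. \<psi> (c + p * a + q * s))"
proof -
  obtain \<psi>' \<psi>'' where
    d1: "\<And>x. x \<in> S \<Longrightarrow> (\<psi> has_vector_derivative \<psi>' x) (at x within S)" and
    d2: "\<And>x. x \<in> S \<Longrightarrow> (\<psi>' has_vector_derivative \<psi>'' x) (at x within S)" and
    n0: "\<And>x. x \<in> S \<Longrightarrow> norm (\<psi> x) = 1" and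
    n1: "\<And>x. x \<in> S \<Longrightarrow> norm (\<psi>' x) \<le> \<beta>" and
    n2: "\<And>x. x \<in> S \<Longrightarrow> norm (\<psi>'' x) \<le> \<beta>\<^sup>2"
    using C2 unfolding C2_unimod_on_def by metis
  have cvx: "convex {0..\<tau>::real}" by simp
  have subA: "(c + q * s) + p * a \<in> S" if "a \<in> {0..\<tau>}" "s \<in> {0..\<tau>}" for a s
  proof -
    have "c + p * a + q * s \<in> S" by (rule sub[OF that])
    moreover have "c + p * a + q * s = (c + q * s) + p * a" by simp
    ultimately show ?thesis by simp
  qed
  have lipA: "norm (\<psi> (c + p * a + q * s) - \<psi> (c + p * a' + q * s)) \<le> \<beta> * \<bar>a - a'\<bar>"
    if a: "a \<in> {0..\<tau>}" and a': "a' \<in> {0..\<tau>}" and s: "s \<in> {0..\<tau>}" for a a' s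
  proof -
    have "norm (\<psi> ((c + q * s) + p * a) - \<psi> ((c + q * s) + p * a')) \<le> (\<bar>p\<bar> * \<beta>) * \<bar>a - a'\<bar>"
    proof (rule lip1[OF cvx _ _ a a'])
      fix x assume x: "x \<in> {0..\<tau>}"
      show "((\<lambda>x. \<psi> ((c + q * s) + p * x)) has_vector_derivative p *\<^sub>R \<psi>' ((c + q * s) + p * x)) (at x within {0..\<tau>})"
        by (rule chain_affine[OF d1 _ x]) (use subA s in auto)
      have "c + q * s + p * x \<in> S" using sub[OF x s] by (simp add: algebra_simps)
      then show "norm (p *\<^sub>R \<psi>' ((c + q * s) + p * x)) \<le> \<bar>p\<bar> * \<beta>"
        using n1 by (simp add: mult_left_mono)
    qed
    also have "\<dots> \<le> \<beta> * \<bar>a - a'\<bar>" using p beta by (intro mult_right_mono) (auto intro: mult_left_le_one_le)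
    finally show ?thesis by (simp add: algebra_simps)
  qed
  have lipS: "norm (\<psi> (c + p * a + q * s) - \<psi> (c + p * a + q * s')) \<le> \<beta> * \<bar>s - s'\<bar>"
    if a: "a \<in> {0..\<tau>}" and s: "s \<in> {0..\<tau>}" and s': "s' \<in> {0..\<tau>}" for a s s'
  proof -
    have "norm (\<psi> ((c + p * a) + q * s) - \<psi> ((c + p * a) + q * s')) \<le> (\<bar>q\<bar> * \<beta>) * \<bar>s - s'\<bar>"
    proof (rule lip1[OF cvx _ _ s s'])
      fix x assume x: "x \<in> {0..\<tau>}"
      show "((\<lambda>x. \<psi> ((c + p * a) + q * x)) has_vector_derivative q *\<^sub>R \<psi>' ((c + p * a) + q * x)) (at x within {0..\<tau>})"
        by (rule chain_affine[OF d1 _ x]) (use sub a in auto)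
      have "c + p * a + q * x \<in> S" using sub[OF a x] by (simp add: algebra_simps)
      then show "norm (q *\<^sub>R \<psi>' ((c + p * a) + q * x)) \<le> \<bar>q\<bar> * \<beta>"
        using n1 by (simp add: mult_left_mono)
    qed
    also have "\<dots> \<le> \<beta> * \<bar>s - s'\<bar>" using q beta by (intro mult_right_mono) (auto intro: mult_left_le_one_le)
    finally show ?thesis by (simp add: algebra_simps)
  qed
  have lip'S: "norm (\<psi>' x - \<psi>' y) \<le> \<beta>\<^sup>2 * \<bar>x - y\<bar>" if "x \<in> S" "y \<in> S" for x y
    by (rule lip1[OF S d2 n2 that])
  have mixed: "norm (\<psi> (c + p * a + q * s) - \<psi> (c + p * a' + q * s) - \<psi> (c + p * a + q * s') + \<psi> (c + p * a' + q * s'))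
      \<le> \<beta>\<^sup>2 * \<bar>a - a'\<bar> * \<bar>s - s'\<bar>"
    if a: "a \<in> {0..\<tau>}" and a': "a' \<in> {0..\<tau>}" and s: "s \<in> {0..\<tau>}" and s': "s' \<in> {0..\<tau>}" for a a' s s'
  proof -
    define chi where "chi = (\<lambda>x. \<psi> ((c + p * a) + q * x) - \<psi> ((c + p * a') + q * x))"
    have "norm (chi s - chi s') \<le> (\<bar>q\<bar> * (\<beta>\<^sup>2 * (\<bar>p\<bar> * \<bar>a - a'\<bar>))) * \<bar>s - s'\<bar>"
    proof (rule lip1[OF cvx _ _ s s'])
      fix x assume x: "x \<in> {0..\<tau>}"
      have in1: "c + p * a + q * x \<in> S" and in2: "c + p * a' + q * x \<in> S" using sub[OF a x] sub[OF a' x] by auto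
      show "(chi has_vector_derivative (q *\<^sub>R \<psi>' ((c + p * a) + q * x) - q *\<^sub>R \<psi>' ((c + p * a') + q * x))) (at x within {0..\<tau>})"
        unfolding chi_def
        by (intro has_vector_derivative_diff chain_affine[OF d1 _ x]) (use sub a a' in auto)
      have "norm (\<psi>' (c + p * a + q * x) - \<psi>' (c + p * a' + q * x)) \<le> \<beta>\<^sup>2 * \<bar>(c + p * a + q * x) - (c + p * a' + q * x)\<bar>"
        by (rule lip'S[OF in1 in2])
      also have "\<bar>(c + p * a + q * x) - (c + p * a' + q * x)\<bar> = \<bar>p\<bar> * \<bar>a - a'\<bar>"
        by (simp add: abs_mult[symmetric] algebra_simps)
      finally have "norm (\<psi>' (c + p * a + q * x) - \<psi>' (c + p * a' + q * x)) \<le> \<beta>\<^sup>2 * (\<bar>p\<bar> * \<bar>a - a'\<bar>)" .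
      then show "norm (q *\<^sub>R \<psi>' ((c + p * a) + q * x) - q *\<^sub>R \<psi>' ((c + p * a') + q * x)) \<le> \<bar>q\<bar> * (\<beta>\<^sup>2 * (\<bar>p\<bar> * \<bar>a - a'\<bar>))"
        by (simp add: scaleR_diff_right[symmetric] mult_left_mono)
    qed
    also have "\<dots> \<le> \<beta>\<^sup>2 * \<bar>a - a'\<bar> * \<bar>s - s'\<bar>"
    proof -
      have "\<bar>q\<bar> * \<bar>p\<bar> \<le> 1" using p q by (simp add: mult_le_one)
      then have "(\<bar>q\<bar> * \<bar>p\<bar>) * (\<beta>\<^sup>2 * \<bar>a - a'\<bar> * \<bar>s - s'\<bar>) \<le> 1 * (\<beta>\<^sup>2 * \<bar>a - a'\<bar> * \<bar>s - s'\<bar>)"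
        by (rule mult_right_mono) simp
      then show ?thesis by (simp add: algebra_simps)
    qed
    finally show ?thesis unfolding chi_def by (simp add: algebra_simps)
  qed
  show ?thesis unfolding nice_def
    using beta lipA lipS mixed n0 sub by auto
qed

lemma convex_thicken:
  assumes "is_interval I"
  shows "convex (thicken I \<tau>)"
proof -
  have "thicken I \<tau> = (\<Union>x\<in>I. \<Union>y\<in>{-\<tau>..\<tau>}. {x + y})" unfolding thicken_def by blast
  then show ?thesis using convex_sums[OF is_interval_convex[OF assms] convex_real_interval(5)] by simp
qed

lemma in_thicken: "x \<in> I \<Longrightarrow> d \<in> {-\<tau>..\<tau>} \<Longrightarrow> x + d \<in> thicken I \<tau>"
  unfolding thicken_def by blast

lemma nice_cont:
  assumes "nice \<tau> L G" "a \<in> {0..\<tau>}"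
  shows "continuous_on {0..\<tau>} (G a)"
proof -
  have "L-lipschitz_on {0..\<tau>} (G a)"
    by (rule lipschitz_onI) (use assms in \<open>auto simp: nice_def dist_norm\<close>)
  then show ?thesis by (rule lipschitz_on_continuous_on)
qed

lemma osc2:
  fixes G :: "real \<Rightarrow> real \<Rightarrow> complex"
  assumes tau: "\<tau> > 0" and m: "m \<noteq> 0" and G: "nice \<tau> L G"
  shows "norm (integral {0..\<tau>} (\<lambda>a. exp (- \<i> * complex_of_real (m * a)) *
            integral {0..\<tau>} (\<lambda>s. exp (- \<i> * complex_of_real (m * s)) * G a s)))
         \<le> pi / \<bar>m\<bar> * (pi / \<bar>m\<bar> * (1 + \<tau> * L / 2) + \<tau> * (pi / \<bar>m\<bar> * (L + \<tau> * L\<^sup>2 / 2)) / 2)"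
proof -
  define e where "e = (\<lambda>t::real. exp (- \<i> * complex_of_real (m * t)))"
  define Phi where "Phi = (\<lambda>a. integral {0..\<tau>} (\<lambda>s. e s * G a s))"
  have L: "0 \<le> L" using G by (simp add: nice_def)
  have ce: "continuous_on S e" for S unfolding e_def by (intro continuous_intros)
  have int: "(\<lambda>s. e s * G a s) integrable_on {0..\<tau>}" if "a \<in> {0..\<tau>}" for a
    by (intro integrable_continuous_interval continuous_on_mult ce nice_cont[OF G that])
  have bPhi: "norm (Phi a) \<le> pi / \<bar>m\<bar> * (1 + \<tau> * L / 2)" if a: "a \<in> {0..\<tau>}" for a
    unfolding Phi_def e_def
    by (rule osc1[OF tau m L]) (use G a in \<open>auto simp: nice_def\<close>)
  have lPhi: "norm (Phi a - Phi a') \<le> (pi / \<bar>m\<bar> * (L + \<tau> * L\<^sup>2 / 2)) * \<bar>a - a'\<bar>"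
    if a: "a \<in> {0..\<tau>}" and a': "a' \<in> {0..\<tau>}" for a a'
  proof -
    have "Phi a - Phi a' = integral {0..\<tau>} (\<lambda>s. e s * (G a s - G a' s))"
      unfolding Phi_def by (subst integral_diff[OF int[OF a] int[OF a'], symmetric]) (simp add: algebra_simps)
    also have "norm \<dots> \<le> pi / \<bar>m\<bar> * (L * \<bar>a - a'\<bar> + \<tau> * (L\<^sup>2 * \<bar>a - a'\<bar>) / 2)"
      unfolding e_def
    proof (rule osc1[OF tau m])
      show "0 \<le> L\<^sup>2 * \<bar>a - a'\<bar>" by simp
      fix s assume s: "s \<in> {0..\<tau>}"
      show "norm (G a s - G a' s) \<le> L * \<bar>a - a'\<bar>" using G a a' s by (auto simp: nice_def)
    next
      fix s t assume s: "s \<in> {0..\<tau>}" and t: "t \<in> {0..\<tau>}"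
      have "norm (G a s - G a' s - G a t + G a' t) \<le> L\<^sup>2 * \<bar>a - a'\<bar> * \<bar>s - t\<bar>"
        using G a a' s t unfolding nice_def by blast
      then show "norm (G a s - G a' s - (G a t - G a' t)) \<le> L\<^sup>2 * \<bar>a - a'\<bar> * \<bar>s - t\<bar>"
        by (simp add: algebra_simps)
    qed
    also have "\<dots> = (pi / \<bar>m\<bar> * (L + \<tau> * L\<^sup>2 / 2)) * \<bar>a - a'\<bar>" by (simp add: algebra_simps)
    finally show ?thesis .
  qed
  have "norm (integral {0..\<tau>} (\<lambda>a. e a * Phi a))
     \<le> pi / \<bar>m\<bar> * (pi / \<bar>m\<bar> * (1 + \<tau> * L / 2) + \<tau> * (pi / \<bar>m\<bar> * (L + \<tau> * L\<^sup>2 / 2)) / 2)"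
    unfolding e_def
    by (rule osc1[OF tau m]) (use bPhi lPhi L m tau in auto)
  then show ?thesis unfolding Phi_def e_def .
qed

lemma U_density:
  assumes tau: "\<tau> > 0"
  shows "uniform_measure lborel {0..\<tau>} = density lborel (\<lambda>x. ennreal (indicator {0..\<tau>} x / \<tau>))"
  unfolding uniform_measure_def
proof (intro arg_cong[where f="density lborel"] ext)
  fix x :: real
  show "indicator {0..\<tau>} x / emeasure lborel {0..\<tau>} = ennreal (indicator {0..\<tau>} x / \<tau>)"
    using tau by (auto split: split_indicator) (metis divide_ennreal ennreal_1 zero_le_one)
qed

lemma U_int_cont:
  fixes \<phi> :: "real \<Rightarrow> complex"
  assumes tau: "\<tau> > 0" and c: "continuous_on {0..\<tau>} \<phi>"
  shows "integral\<^sup>L (uniform_measure lborel {0..\<tau>}) (\<lambda>s. indicator {0..\<tau>} s * \<phi> s) = of_real (1 / \<tau>) * integral {0..\<tau>} \<phi>"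
proof -
  have m: "(\<lambda>s. indicator {0..\<tau>} s *\<^sub>R \<phi> s) \<in> borel_measurable borel"
    by (rule borel_measurable_continuous_on_indicator[OF _ c]) simp
  have m': "(\<lambda>s. indicator {0..\<tau>} s * \<phi> s) \<in> borel_measurable lborel"
  proof -
    have "(\<lambda>s. indicator {0..\<tau>} s * \<phi> s) = (\<lambda>s. indicator {0..\<tau>} s *\<^sub>R \<phi> s)"
      by (auto split: split_indicator)
    then show ?thesis using m by simp
  qed
  have "integral\<^sup>L (uniform_measure lborel {0..\<tau>}) (\<lambda>s. indicator {0..\<tau>} s * \<phi> s)
      = integral\<^sup>L lborel (\<lambda>x. (indicator {0..\<tau>} x / \<tau>) *\<^sub>R (indicator {0..\<tau>} x * \<phi> x))"
    unfolding U_density[OF tau] by (rule integral_density[OF m']) (use tau in auto)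
  also have "\<dots> = integral\<^sup>L lborel (\<lambda>x. (1 / \<tau>) *\<^sub>R (indicator {0..\<tau>} x *\<^sub>R \<phi> x))"
    by (intro Bochner_Integration.integral_cong refl) (auto split: split_indicator)
  also have "\<dots> = (1 / \<tau>) *\<^sub>R set_lebesgue_integral lborel {0..\<tau>} \<phi>"
    unfolding set_lebesgue_integral_def by (rule integral_scaleR_right)
  also have "set_lebesgue_integral lborel {0..\<tau>} \<phi> = integral {0..\<tau>} \<phi>"
    by (rule set_borel_integral_eq_integral(2)) (unfold set_integrable_def, rule borel_integrable_compact[OF _ c], simp)
  finally show ?thesis by (simp add: scaleR_conv_of_real)
qed

lemma Phi_cont:
  fixes G :: "real \<Rightarrow> real \<Rightarrow> complex"
  assumes G: "nice \<tau> L G"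
  shows "continuous_on {0..\<tau>} (\<lambda>a. integral {0..\<tau>} (\<lambda>s. exp (- \<i> * complex_of_real (m * s)) * G a s))"
proof -
  define e where "e = (\<lambda>t::real. exp (- \<i> * complex_of_real (m * t)))"
  have L: "0 \<le> L" using G by (simp add: nice_def)
  have ce: "continuous_on S e" for S unfolding e_def by (intro continuous_intros)
  have int: "(\<lambda>s. e s * G a s) integrable_on {0..\<tau>}" if "a \<in> {0..\<tau>}" for a
    by (intro integrable_continuous_interval continuous_on_mult ce nice_cont[OF G that])
  have "(L * (if \<tau> \<ge> 0 then \<tau> else 0))-lipschitz_on {0..\<tau>} (\<lambda>a. integral {0..\<tau>} (\<lambda>s. e s * G a s))"
  proof (rule lipschitz_onI)
    show "0 \<le> L * (if \<tau> \<ge> 0 then \<tau> else 0)" using L by simp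
    fix a a' assume a: "a \<in> {0..\<tau>}" and a': "a' \<in> {0..\<tau>}"
    then have t: "\<tau> \<ge> 0" by simp
    have "integral {0..\<tau>} (\<lambda>s. e s * G a s) - integral {0..\<tau>} (\<lambda>s. e s * G a' s)
        = integral {0..\<tau>} (\<lambda>s. e s * (G a s - G a' s))"
      by (subst integral_diff[OF int[OF a] int[OF a'], symmetric]) (simp add: algebra_simps)
    also have "norm \<dots> \<le> (L * \<bar>a - a'\<bar>) * (\<tau> - 0)"
    proof (rule integral_bound)
      show "continuous_on {0..\<tau>} (\<lambda>s. e s * (G a s - G a' s))"
        by (intro continuous_intros ce nice_cont[OF G a] nice_cont[OF G a'])
      fix s assume s: "s \<in> {0..\<tau>}"
      have "norm (G a s - G a' s) \<le> L * \<bar>a - a'\<bar>" using G a a' s by (auto simp: nice_def)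
      then show "norm (e s * (G a s - G a' s)) \<le> L * \<bar>a - a'\<bar>" by (simp add: e_def norm_mult)
    qed (use t in auto)
    finally show "dist (integral {0..\<tau>} (\<lambda>s. e s * G a s)) (integral {0..\<tau>} (\<lambda>s. e s * G a' s))
        \<le> L * (if \<tau> \<ge> 0 then \<tau> else 0) * dist a a'"
      using t by (simp add: dist_norm algebra_simps)
  qed
  then show ?thesis unfolding e_def by (rule lipschitz_on_continuous_on)
qed

lemma nice_joint_cont:
  assumes G: "nice \<tau> L G"
  shows "continuous_on ({0..\<tau>} \<times> {0..\<tau>}) (\<lambda>p. G (fst p) (snd p))"
proof -
  have L: "0 \<le> L" using G by (simp add: nice_def)
  have "(2 * L)-lipschitz_on ({0..\<tau>} \<times> {0..\<tau>}) (\<lambda>p. G (fst p) (snd p))"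
  proof (rule lipschitz_onI)
    fix p p' :: "real \<times> real" assume p: "p \<in> {0..\<tau>} \<times> {0..\<tau>}" and p': "p' \<in> {0..\<tau>} \<times> {0..\<tau>}"
    obtain a s where ps: "p = (a, s)" by (cases p)
    obtain a' s' where ps': "p' = (a', s')" by (cases p')
    have a: "a \<in> {0..\<tau>}" "s \<in> {0..\<tau>}" "a' \<in> {0..\<tau>}" "s' \<in> {0..\<tau>}" using p p' ps ps' by auto
    have "norm (G a s - G a' s') \<le> norm (G a s - G a' s) + norm (G a' s - G a' s')"
      by (rule order_trans[OF _ norm_triangle_ineq]) simp
    also have "\<dots> \<le> L * \<bar>a - a'\<bar> + L * \<bar>s - s'\<bar>"
      using G a unfolding nice_def by (intro add_mono) blast+
    also have "\<dots> \<le> L * dist p p' + L * dist p p'"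
      using dist_fst_le[of p p'] dist_snd_le[of p p'] L
      by (intro add_mono mult_left_mono) (auto simp: ps ps' dist_real_def)
    finally show "dist (G (fst p) (snd p)) (G (fst p') (snd p')) \<le> 2 * L * dist p p'"
      by (simp add: ps ps' dist_norm)
  qed (use L in simp)
  then show ?thesis by (rule lipschitz_on_continuous_on)
qed

lemma sets_UU: "sets (uniform_measure lborel {0..\<tau>} \<Otimes>\<^sub>M uniform_measure lborel {0..\<tau>}) = sets (borel :: (real \<times> real) measure)"
proof -
  have "sets (uniform_measure lborel {0..\<tau>} \<Otimes>\<^sub>M uniform_measure lborel {0..\<tau>}) = sets ((borel :: real measure) \<Otimes>\<^sub>M (borel :: real measure))"
    by (intro sets_pair_measure_cong) simp_all
  then show ?thesis by (simp only: borel_prod)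
qed

lemma conv:
  fixes G :: "real \<Rightarrow> real \<Rightarrow> complex"
  assumes tau: "\<tau> > 0" and G: "nice \<tau> L G"
  shows "integral\<^sup>L (uniform_measure lborel {0..\<tau>} \<Otimes>\<^sub>M uniform_measure lborel {0..\<tau>})
     (\<lambda>(a, s). indicator ({0..\<tau>} \<times> {0..\<tau>}) (a, s) * (exp (- \<i> * complex_of_real (m * a)) *
            (exp (- \<i> * complex_of_real (m * s)) * G a s)))
   = of_real (1 / \<tau>) * (of_real (1 / \<tau>) * integral {0..\<tau>} (\<lambda>a. exp (- \<i> * complex_of_real (m * a)) *
            integral {0..\<tau>} (\<lambda>s. exp (- \<i> * complex_of_real (m * s)) * G a s)))"
proof -
  define U where "U = uniform_measure lborel {0..\<tau>}"
  define e where "e = (\<lambda>t::real. exp (- \<i> * complex_of_real (m * t)))"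
  define Phi where "Phi = (\<lambda>a. integral {0..\<tau>} (\<lambda>s. e s * G a s))"
  define SQ where "SQ = {0..\<tau>} \<times> {0..\<tau>::real}"
  have ce: "continuous_on S e" for S unfolding e_def by (intro continuous_intros)
  have ne: "norm (e t) = 1" for t by (simp add: e_def)
  have pc: "continuous_on {0..\<tau>} Phi" unfolding Phi_def e_def by (rule Phi_cont[OF G])
  interpret U: prob_space U unfolding U_def by (rule prob_space_uniform_measure) (use tau in auto)
  interpret UU: pair_prob_space U U by standard
  define f where "f = (\<lambda>p::real \<times> real. indicator SQ p * (e (fst p) * (e (snd p) * G (fst p) (snd p))))"
  have fcont: "continuous_on SQ (\<lambda>p. e (fst p) * (e (snd p) * G (fst p) (snd p)))"
    unfolding SQ_def
    by (intro continuous_intros continuous_on_compose2[OF ce] nice_joint_cont[OF G]) auto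
  have fmeas: "f \<in> borel_measurable (U \<Otimes>\<^sub>M U)"
  proof -
    have "(\<lambda>p. indicator SQ p *\<^sub>R (e (fst p) * (e (snd p) * G (fst p) (snd p)))) \<in> borel_measurable borel"
      by (rule borel_measurable_continuous_on_indicator[OF _ fcont]) (auto simp: SQ_def intro!: borel_closed closed_Times)
    moreover have "f = (\<lambda>p. indicator SQ p *\<^sub>R (e (fst p) * (e (snd p) * G (fst p) (snd p))))"
      unfolding f_def by (auto split: split_indicator)
    ultimately show ?thesis
      using sets_UU[of \<tau>] unfolding U_def by (simp cong: measurable_cong_sets)
  qed
  have fint: "integrable (U \<Otimes>\<^sub>M U) f"
  proof (rule UU.integrable_const_bound[OF _ fmeas])
    show "AE x in U \<Otimes>\<^sub>M U. norm (f x) \<le> 1"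
    proof (rule AE_I2)
      fix p :: "real \<times> real"
      show "norm (f p) \<le> 1"
      proof (cases "p \<in> SQ")
        case True
        then have "norm (G (fst p) (snd p)) \<le> 1" using G by (auto simp: nice_def SQ_def)
        then show ?thesis using True by (simp add: f_def norm_mult ne)
      qed (simp add: f_def)
    qed
  qed
  have inner: "integral\<^sup>L U (\<lambda>s. f (a, s)) = indicator {0..\<tau>} a * (of_real (1 / \<tau>) * (e a * Phi a))" for a
  proof (cases "a \<in> {0..\<tau>}")
    case True
    have "integral\<^sup>L U (\<lambda>s. f (a, s)) = integral\<^sup>L U (\<lambda>s. indicator {0..\<tau>} s * (e a * (e s * G a s)))"
      by (intro Bochner_Integration.integral_cong refl) (use True in \<open>auto simp: f_def SQ_def split: split_indicator\<close>)
    also have "\<dots> = of_real (1 / \<tau>) * integral {0..\<tau>} (\<lambda>s. e a * (e s * G a s))"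
      unfolding U_def by (rule U_int_cont[OF tau]) (intro continuous_intros ce nice_cont[OF G True])
    also have "integral {0..\<tau>} (\<lambda>s. e a * (e s * G a s)) = e a * Phi a"
      unfolding Phi_def by (rule Henstock_Kurzweil_Integration.integral_mult_right)
    finally show ?thesis using True by simp
  next
    case False
    then have "(\<lambda>s. f (a, s)) = (\<lambda>s. 0)" by (auto simp: f_def SQ_def)
    then show ?thesis using False by simp
  qed
  have "integral\<^sup>L (U \<Otimes>\<^sub>M U) f = integral\<^sup>L U (\<lambda>a. integral\<^sup>L U (\<lambda>s. f (a, s)))"
    using UU.integral_fst[of "\<lambda>a s. f (a, s)"] fint by simp
  also have "\<dots> = integral\<^sup>L U (\<lambda>a. indicator {0..\<tau>} a * (of_real (1 / \<tau>) * (e a * Phi a)))"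
    by (simp add: inner)
  also have "\<dots> = of_real (1 / \<tau>) * integral {0..\<tau>} (\<lambda>a. of_real (1 / \<tau>) * (e a * Phi a))"
    unfolding U_def
    by (rule U_int_cont[OF tau]) (intro continuous_intros ce pc)
  also have "integral {0..\<tau>} (\<lambda>a. of_real (1 / \<tau>) * (e a * Phi a)) = of_real (1 / \<tau>) * integral {0..\<tau>} (\<lambda>a. e a * Phi a)"
    by (rule Henstock_Kurzweil_Integration.integral_mult_right)
  finally have "integral\<^sup>L (U \<Otimes>\<^sub>M U) f = of_real (1 / \<tau>) * (of_real (1 / \<tau>) * integral {0..\<tau>} (\<lambda>a. e a * Phi a))" .
  moreover have "f = (\<lambda>(a, s). indicator ({0..\<tau>} \<times> {0..\<tau>}) (a, s) * (e a * (e s * G a s)))"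
    by (auto simp: f_def SQ_def)
  ultimately show ?thesis unfolding U_def e_def Phi_def by simp
qed

definition gidx :: "nat \<Rightarrow> nat" where "gidx i = (if i = 4 then 3 else i)"

definition Gi :: "(nat \<Rightarrow> real \<Rightarrow> complex) \<Rightarrow> nat \<Rightarrow> real \<Rightarrow> real \<Rightarrow> real \<Rightarrow> complex" where
  "Gi h i a s z = (if i = 1 then h 2 (z + a - s) * h 3 (z + a)
     else if i = 2 then h 1 (z + s - a) * h 3 (z + s) else h 1 (z - a) * h 2 (z - s))"

definition eph :: "real \<Rightarrow> real \<Rightarrow> complex" where "eph m x = exp (- \<i> * complex_of_real (m * x))"

definition Fn :: "(nat \<Rightarrow> real \<Rightarrow> complex) \<Rightarrow> real \<Rightarrow> real \<Rightarrow> real \<Rightarrow> real \<Rightarrow> complex" where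
  "Fn h m a s x = fprod h a s x * eph m x"

lemma eph_add: "eph m (x + y) = eph m x * eph m y"
  unfolding eph_def by (simp add: distrib_left exp_add[symmetric] algebra_simps)

lemma eph_0[simp]: "eph m 0 = 1" by (simp add: eph_def)

lemma norm_eph[simp]: "norm (eph m x) = 1" by (simp add: eph_def)

lemma Fn_identity:
  assumes "i \<in> {1..4}"
  shows "Fn h m a s (z + tshift a s i) = (h (gidx i) z * eph m z) * (eph m (tshift a s i) * Gi h i a s z)"
proof -
  have "i = 1 \<or> i = 2 \<or> i = 3 \<or> i = 4" using assms by auto
  then show ?thesis
    by (elim disjE) (simp_all add: Fn_def fprod_def tshift_def gidx_def Gi_def eph_add algebra_simps)
qed

lemma Gi_nice:
  assumes tau: "\<tau> > 0" and beta: "\<beta> > 0"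
    and intv: "\<forall>i\<in>{1..4}. is_interval (I i)"
    and C2: "\<forall>i\<in>{1..4}. \<forall>j\<in>{1..3}. \<not> idx_sub i j \<longrightarrow> C2_unimod_on (h j) (thicken (I i) \<tau>) \<beta>"
    and i: "i \<in> {1..4}" and z: "z \<in> I i"
  shows "nice \<tau> (\<beta> + \<beta>) (\<lambda>a s. Gi h i a s z)"
proof -
  have cv: "convex (thicken (I i) \<tau>)" using intv i by (intro convex_thicken) auto
  have base: "nice \<tau> \<beta> (\<lambda>a s. h j (z + p * a + q * s))"
    if j: "j \<in> {1..3}" "\<not> idx_sub i j" and pq: "\<bar>p\<bar> \<le> 1" "\<bar>q\<bar> \<le> 1"
      and r: "\<And>a s. a \<in> {0..\<tau>} \<Longrightarrow> s \<in> {0..\<tau>} \<Longrightarrow> p * a + q * s \<in> {-\<tau>..\<tau>}" for j p q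
  proof (rule nice_base[OF tau _ cv _ pq])
    show "C2_unimod_on (h j) (thicken (I i) \<tau>) \<beta>" using C2 i j by blast
    show "0 \<le> \<beta>" using beta by simp
    fix a s assume "a \<in> {0..\<tau>}" "s \<in> {0..\<tau>}"
    from in_thicken[OF z r[OF this]] show "z + p * a + q * s \<in> thicken (I i) \<tau>" by (simp add: add.assoc)
  qed
  have "i = 1 \<or> i = 2 \<or> i = 3 \<or> i = 4" using i by auto
  then show ?thesis
  proof (elim disjE)
    assume i1: "i = 1"
    have "nice \<tau> (\<beta> + \<beta>) (\<lambda>a s. h 2 (z + 1 * a + (-1) * s) * h 3 (z + 1 * a + 0 * s))"
      by (intro nice_mult base) (auto simp: i1 idx_sub_def)
    then show ?thesis by (simp add: Gi_def i1 algebra_simps)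
  next
    assume i2: "i = 2"
    have "nice \<tau> (\<beta> + \<beta>) (\<lambda>a s. h 1 (z + (-1) * a + 1 * s) * h 3 (z + 0 * a + 1 * s))"
      by (intro nice_mult base) (auto simp: i2 idx_sub_def)
    then show ?thesis by (simp add: Gi_def i2 algebra_simps)
  next
    assume i3: "i = 3"
    have "nice \<tau> (\<beta> + \<beta>) (\<lambda>a s. h 1 (z + (-1) * a + 0 * s) * h 2 (z + 0 * a + (-1) * s))"
      by (intro nice_mult base) (auto simp: i3 idx_sub_def)
    then show ?thesis by (simp add: Gi_def i3 algebra_simps)
  next
    assume i4: "i = 4"
    have "nice \<tau> (\<beta> + \<beta>) (\<lambda>a s. h 1 (z + (-1) * a + 0 * s) * h 2 (z + 0 * a + (-1) * s))"
      by (intro nice_mult base) (auto simp: i4 idx_sub_def)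
    then show ?thesis by (simp add: Gi_def i4 algebra_simps)
  qed
qed

lemma translate_set_integral:
  fixes f :: "real \<Rightarrow> complex"
  shows "set_lebesgue_integral lborel ((\<lambda>x. x + c) ` A) f = integral\<^sup>L lborel (\<lambda>z. indicator A z *\<^sub>R f (z + c))"
proof -
  have "set_lebesgue_integral lborel ((\<lambda>x. x + c) ` A) f
      = \<bar>1\<bar> *\<^sub>R integral\<^sup>L lborel (\<lambda>x. indicator ((\<lambda>x. x + c) ` A) (c + 1 * x) *\<^sub>R f (c + 1 * x))"
    unfolding set_lebesgue_integral_def by (rule lborel_integral_real_affine) simp
  also have "\<dots> = integral\<^sup>L lborel (\<lambda>z. indicator A z *\<^sub>R f (z + c))"
  proof -
    have "indicator ((\<lambda>x. x + c) ` A) (c + x) = (indicator A x :: real)" for x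
      by (auto split: split_indicator simp: add.commute)
    then show ?thesis by (simp add: add.commute)
  qed
  finally show ?thesis .
qed

lemma arith_final:
  fixes \<tau> \<beta> m :: real
  assumes tau: "\<tau> > 0" and beta: "\<beta> > 0" and m: "m \<noteq> 0"
  shows "(1 / \<tau>) * ((1 / \<tau>) * (pi / \<bar>m\<bar> * (pi / \<bar>m\<bar> * (1 + \<tau> * (8 * \<beta>) / 2)
      + \<tau> * (pi / \<bar>m\<bar> * (8 * \<beta> + \<tau> * (8 * \<beta>)\<^sup>2 / 2)) / 2)))
     \<le> 25 * pi\<^sup>2 / m\<^sup>2 * (max \<beta> (1 / \<tau>))\<^sup>2"
proof -
  have eq: "(1 / \<tau>) * ((1 / \<tau>) * (pi / \<bar>m\<bar> * (pi / \<bar>m\<bar> * (1 + \<tau> * (8 * \<beta>) / 2)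
      + \<tau> * (pi / \<bar>m\<bar> * (8 * \<beta> + \<tau> * (8 * \<beta>)\<^sup>2 / 2)) / 2)))
      = pi\<^sup>2 / \<bar>m\<bar>\<^sup>2 * (1 / \<tau> + 4 * \<beta>)\<^sup>2"
  proof -
    define M where "M = \<bar>m\<bar>"
    have M: "M > 0" using m by (simp add: M_def)
    show ?thesis unfolding M_def[symmetric] using tau M by (simp add: field_simps power2_eq_square)
  qed
  have "1 / \<tau> + 4 * \<beta> \<le> 5 * max \<beta> (1 / \<tau>)" by (simp add: max_def)
  moreover have "0 \<le> 1 / \<tau> + 4 * \<beta>" using tau beta by simp
  ultimately have "(1 / \<tau> + 4 * \<beta>)\<^sup>2 \<le> (5 * max \<beta> (1 / \<tau>))\<^sup>2" by (intro power_mono)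
  then have "pi\<^sup>2 / \<bar>m\<bar>\<^sup>2 * (1 / \<tau> + 4 * \<beta>)\<^sup>2 \<le> pi\<^sup>2 / \<bar>m\<bar>\<^sup>2 * (5 * max \<beta> (1 / \<tau>))\<^sup>2"
    by (rule mult_left_mono) simp
  then show ?thesis unfolding eq by (simp add: power_mult_distrib mult.assoc mult.left_commute)
qed

lemma set4: "{1..4::nat} = {1,2,3,4}" by auto

lemma prod4: "(\<Prod>i\<in>{1..4::nat}. f i) = f 1 * f 2 * f 3 * f 4"
  by (subst set4) (simp add: mult.assoc)

lemma norm_aux:
  fixes c J :: complex
  assumes "\<tau> > 0"
  shows "norm (c * (complex_of_real (1 / \<tau>) * (complex_of_real (1 / \<tau>) * J))) = norm c * ((1 / \<tau>) * ((1 / \<tau>) * norm J))"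
  using assms by (simp only: norm_mult norm_of_real)

lemma ts1: "tshift a s 1 = a" and ts2: "tshift a s 2 = s" and ts3: "tshift a s 3 = 0" and ts4: "tshift a s 4 = 0"
  by (simp_all add: tshift_def)

lemma g1: "gidx 1 = 1" and g2: "gidx 2 = 2" and g3: "gidx 3 = 3" and g4: "gidx 4 = 3"
  by (simp_all add: gidx_def)

theorem mainTheorem9:
  shows "\<exists>C::real. \<forall>(I :: nat \<Rightarrow> real set) (h :: nat \<Rightarrow> real \<Rightarrow> complex) (\<tau>::real) (\<alpha>::real) (\<beta>::real) (m::real).
    (\<forall>i\<in>{1..4}. is_interval (I i)) \<longrightarrow> \<tau> > 0 \<longrightarrow> \<alpha> > 0 \<longrightarrow> \<beta> > 0 \<longrightarrow>
    (\<forall>j\<in>{1..3}. h j \<in> borel_measurable lborel) \<longrightarrow>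
    (\<forall>i\<in>{1..4}. \<forall>j\<in>{1..3}. idx_sub i j \<longrightarrow>
        (\<integral>\<^sup>+ x\<in>I i. ennreal (norm (h j x)) \<partial>lborel) \<le> ennreal \<alpha>) \<longrightarrow>
    (\<forall>i\<in>{1..4}. \<forall>j\<in>{1..3}. \<not> idx_sub i j \<longrightarrow> C2_unimod_on (h j) (thicken (I i) \<tau>) \<beta>) \<longrightarrow>
    m \<noteq> 0 \<longrightarrow>
    norm (integral\<^sup>L (uniform_measure lborel {0..\<tau>} \<Otimes>\<^sub>M uniform_measure lborel {0..\<tau>})
            (\<lambda>(t1, t2). \<Prod>i\<in>{1..4::nat}.
               set_lebesgue_integral lborel ((\<lambda>x. x + tshift t1 t2 i) ` I i)
                 (\<lambda>x. fprod h t1 t2 x * exp (- \<i> * complex_of_real (m * x)))))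
      \<le> C * \<alpha> ^ 4 / m\<^sup>2 * (max \<beta> (1 / \<tau>))\<^sup>2"
proof (intro exI[of _ "25 * pi\<^sup>2"] allI impI)
  fix I :: "nat \<Rightarrow> real set" and h :: "nat \<Rightarrow> real \<Rightarrow> complex" and \<tau> \<alpha> \<beta> m :: real
  assume intv: "\<forall>i\<in>{1..4}. is_interval (I i)" and tau: "\<tau> > 0" and alpha: "\<alpha> > 0" and beta: "\<beta> > 0"
    and hm: "\<forall>j\<in>{1..3}. h j \<in> borel_measurable lborel"
    and L1: "\<forall>i\<in>{1..4}. \<forall>j\<in>{1..3}. idx_sub i j \<longrightarrow> (\<integral>\<^sup>+ x\<in>I i. ennreal (norm (h j x)) \<partial>lborel) \<le> ennreal \<alpha>"
    and C2: "\<forall>i\<in>{1..4}. \<forall>j\<in>{1..3}. \<not> idx_sub i j \<longrightarrow> C2_unimod_on (h j) (thicken (I i) \<tau>) \<beta>"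
    and m: "m \<noteq> 0"
  define U where "U = uniform_measure lborel {0..\<tau>}"
  define Q where "Q = U \<Otimes>\<^sub>M U"
  define P where "P = Pi\<^sub>M {1..4::nat} (\<lambda>_. lborel :: real measure)"
  define SQ where "SQ = {0..\<tau>} \<times> {0..\<tau>::real}"
  define E where "E = (\<lambda>(t1, t2). \<Prod>i\<in>{1..4::nat}.
               set_lebesgue_integral lborel ((\<lambda>x. x + tshift t1 t2 i) ` I i)
                 (\<lambda>x. fprod h t1 t2 x * exp (- \<i> * complex_of_real (m * x))))"
  define Psi where "Psi = (\<lambda>(t::real \<times> real) (y::nat \<Rightarrow> real). indicator SQ t *
     (\<Prod>i\<in>{1..4}. indicator (I i) (y i) *\<^sub>R Fn h m (fst t) (snd t) (y i + tshift (fst t) (snd t) i)))"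
  define B where "B = (\<lambda>y::nat \<Rightarrow> real. \<Prod>i\<in>{1..4}. indicator (I i) (y i) * norm (h (gidx i) (y i)))"
  define Kc where "Kc = 25 * pi\<^sup>2 / m\<^sup>2 * (max \<beta> (1 / \<tau>))\<^sup>2"
  have Kc0: "Kc \<ge> 0" by (simp add: Kc_def)
  have B0: "B y \<ge> 0" for y unfolding B_def by (intro prod_nonneg) simp

  interpret U: prob_space U unfolding U_def by (rule prob_space_uniform_measure) (use tau in auto)
  interpret UU: pair_prob_space U U by standard
  interpret Q: prob_space Q unfolding Q_def by (rule UU.prob_space_axioms)
  interpret PS: product_sigma_finite "\<lambda>_::nat. lborel :: real measure"
    by (simp add: product_sigma_finite_def lborel.sigma_finite_measure_axioms)
  interpret FP: finite_product_sigma_finite "\<lambda>_::nat. lborel :: real measure" "{1..4::nat}"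
    by standard simp
  interpret QP: pair_sigma_finite Q P unfolding P_def
    by (intro pair_sigma_finite.intro Q.sigma_finite_measure_axioms FP.sigma_finite_measure_axioms)

  have hmeas[measurable]: "h 1 \<in> borel_measurable borel" "h 2 \<in> borel_measurable borel" "h 3 \<in> borel_measurable borel"
    using hm by auto
  have hmeas'[measurable]: "h (Suc 0) \<in> borel_measurable borel" using hm by auto
  have Imeas[measurable]: "I 1 \<in> sets borel" "I 2 \<in> sets borel" "I 3 \<in> sets borel" "I 4 \<in> sets borel"
    using intv by (auto intro: real_interval_borel_measurable)
  have Imeas'[measurable]: "I (Suc 0) \<in> sets borel" using Imeas by simp
  have SQmeas[measurable]: "SQ \<in> sets Q"
  proof -
    have "SQ \<in> sets borel" unfolding SQ_def by (intro borel_closed closed_Times) auto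
    then show ?thesis unfolding Q_def U_def using sets_UU[of \<tau>] by simp
  qed

  have SQmeas2[measurable]: "SQ \<in> sets (borel \<Otimes>\<^sub>M borel)"
  proof -
    have "SQ \<in> sets borel" unfolding SQ_def by (intro borel_closed closed_Times) auto
    then show ?thesis by (simp only: borel_prod)
  qed

  have PB: "norm (indicator (I i) z *\<^sub>R Fn h m a s (z + tshift a s i)) \<le> indicator (I i) z * norm (h (gidx i) z)"
    if i: "i \<in> {1..4}" and a: "a \<in> {0..\<tau>}" and s: "s \<in> {0..\<tau>}" for i z a s
  proof (cases "z \<in> I i")
    case True
    have "nice \<tau> (\<beta> + \<beta>) (\<lambda>a s. Gi h i a s z)" by (rule Gi_nice[OF tau beta intv C2 i True])
    then have "norm (Gi h i a s z) \<le> 1" using a s by (auto simp: nice_def)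
    then have "norm (h (gidx i) z) * norm (Gi h i a s z) \<le> norm (h (gidx i) z) * 1"
      by (intro mult_left_mono) auto
    then show ?thesis using True by (simp add: Fn_identity[OF i] norm_mult)
  qed simp

  have L1': "(\<integral>\<^sup>+ z. ennreal (indicator (I i) z * norm (h (gidx i) z)) \<partial>lborel) \<le> ennreal \<alpha>"
    if i: "i \<in> {1..4}" for i
  proof -
    have "gidx i \<in> {1..3}" "idx_sub i (gidx i)" using i by (auto simp: gidx_def idx_sub_def)
    then have "(\<integral>\<^sup>+ x\<in>I i. ennreal (norm (h (gidx i) x)) \<partial>lborel) \<le> ennreal \<alpha>" using L1 i by blast
    moreover have "(\<lambda>z. ennreal (indicator (I i) z * norm (h (gidx i) z))) = (\<lambda>x. ennreal (norm (h (gidx i) x)) * indicator (I i) x)"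
      by (auto split: split_indicator)
    ultimately show ?thesis by simp
  qed

  have IntF: "integrable lborel (\<lambda>z. indicator (I i) z *\<^sub>R Fn h m a s (z + tshift a s i))"
    if i: "i \<in> {1..4}" and a: "a \<in> {0..\<tau>}" and s: "s \<in> {0..\<tau>}" for i a s
  proof (rule integrableI_bounded)
    have "i = 1 \<or> i = 2 \<or> i = 3 \<or> i = 4" using i by auto
    then show "(\<lambda>z. indicator (I i) z *\<^sub>R Fn h m a s (z + tshift a s i)) \<in> borel_measurable lborel"
      by (elim disjE; simp add: Fn_def fprod_def eph_def tshift_def; measurable)
    have "(\<integral>\<^sup>+ z. ennreal (norm (indicator (I i) z *\<^sub>R Fn h m a s (z + tshift a s i))) \<partial>lborel)
        \<le> (\<integral>\<^sup>+ z. ennreal (indicator (I i) z * norm (h (gidx i) z)) \<partial>lborel)"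
      by (intro nn_integral_mono ennreal_leI PB[OF i a s])
    also have "\<dots> \<le> ennreal \<alpha>" by (rule L1'[OF i])
    finally show "(\<integral>\<^sup>+ z. ennreal (norm (indicator (I i) z *\<^sub>R Fn h m a s (z + tshift a s i))) \<partial>lborel) < \<infinity>"
      by (simp add: le_less_trans)
  qed

  have PsiB: "norm (Psi t y) \<le> B y" for t y
  proof (cases "t \<in> SQ")
    case True
    obtain a s where t: "t = (a, s)" by (cases t)
    have as: "a \<in> {0..\<tau>}" "s \<in> {0..\<tau>}" using True t by (auto simp: SQ_def)
    have "norm (Psi t y) = norm (\<Prod>i\<in>{1..4}. indicator (I i) (y i) *\<^sub>R Fn h m a s (y i + tshift a s i))"
      using True by (simp add: Psi_def t)
    also have "\<dots> \<le> (\<Prod>i\<in>{1..4}. norm (indicator (I i) (y i) *\<^sub>R Fn h m a s (y i + tshift a s i)))"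
      by (rule norm_prod_le)
    also have "\<dots> \<le> B y" unfolding B_def
      by (intro prod_mono conjI norm_ge_zero PB as) auto
    finally show ?thesis .
  qed (simp add: Psi_def B0)

  have PsiMeas: "case_prod Psi \<in> borel_measurable (Q \<Otimes>\<^sub>M P)"
    unfolding Psi_def P_def Q_def U_def prod4 Fn_def fprod_def eph_def ts1 ts2 ts3 ts4 case_prod_beta' by measurable

  have BMeas: "B \<in> borel_measurable P"
    unfolding B_def P_def prod4 g1 g2 g3 g4 by measurable

  have KB: "(\<integral>\<^sup>+ y. ennreal (B y) \<partial>P) \<le> ennreal (\<alpha> ^ 4)"
  proof -
    have "(\<integral>\<^sup>+ y. ennreal (B y) \<partial>P) = (\<integral>\<^sup>+ y. (\<Prod>i\<in>{1..4}. ennreal (indicator (I i) (y i) * norm (h (gidx i) (y i)))) \<partial>P)"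
      unfolding B_def by (subst prod_ennreal) auto
    also have "\<dots> = (\<Prod>i\<in>{1..4}. \<integral>\<^sup>+ z. ennreal (indicator (I i) z * norm (h (gidx i) z)) \<partial>lborel)"
      unfolding P_def
    proof (rule PS.product_nn_integral_prod)
      fix i :: nat assume "i \<in> {1..4}"
      then have "i = 1 \<or> i = 2 \<or> i = 3 \<or> i = 4" by auto
      then show "(\<lambda>z. ennreal (indicator (I i) z * norm (h (gidx i) z))) \<in> borel_measurable lborel"
        by (elim disjE; simp add: gidx_def; measurable)
    qed simp
    also have "\<dots> \<le> ennreal \<alpha> * ennreal \<alpha> * ennreal \<alpha> * ennreal \<alpha>"
      unfolding prod4 by (intro mult_mono L1') auto
    also have "\<dots> = ennreal (\<alpha> ^ 4)"
    proof -
      have "ennreal (\<alpha> * \<alpha> * \<alpha> * \<alpha>) = ennreal \<alpha> * ennreal \<alpha> * ennreal \<alpha> * ennreal \<alpha>"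
        using alpha by (simp add: ennreal_mult)
      then show ?thesis by (simp only: power4_eq_xxxx)
    qed
    finally show ?thesis .
  qed

  have PsiInt: "integrable (Q \<Otimes>\<^sub>M P) (case_prod Psi)"
  proof (rule integrableI_bounded[OF PsiMeas])
    have "(\<integral>\<^sup>+ p. ennreal (norm (case_prod Psi p)) \<partial>(Q \<Otimes>\<^sub>M P)) \<le> (\<integral>\<^sup>+ p. ennreal (B (snd p)) \<partial>(Q \<Otimes>\<^sub>M P))"
      by (intro nn_integral_mono ennreal_leI) (auto simp: PsiB split: prod.split)
    also have "\<dots> = (\<integral>\<^sup>+ t. (\<integral>\<^sup>+ y. ennreal (B y) \<partial>P) \<partial>Q)"
      by (subst QP.M2.nn_integral_fst[symmetric]) (use BMeas in auto)
    also have "\<dots> = (\<integral>\<^sup>+ y. ennreal (B y) \<partial>P)"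
      by (simp add: Q.emeasure_space_1)
    also have "\<dots> < \<infinity>" using KB by (simp add: le_less_trans)
    finally show "(\<integral>\<^sup>+ p. ennreal (norm (case_prod Psi p)) \<partial>(Q \<Otimes>\<^sub>M P)) < \<infinity>" .
  qed

  have Eeq: "E t = integral\<^sup>L P (Psi t)" if t: "t \<in> SQ" for t
  proof -
    obtain a s where ts: "t = (a, s)" by (cases t)
    have as: "a \<in> {0..\<tau>}" "s \<in> {0..\<tau>}" using t ts by (auto simp: SQ_def)
    have fe: "(\<lambda>x. fprod h a s x * exp (- \<i> * complex_of_real (m * x))) = Fn h m a s"
      by (simp add: fun_eq_iff Fn_def eph_def)
    have "E t = (\<Prod>i\<in>{1..4}. set_lebesgue_integral lborel ((\<lambda>x. x + tshift a s i) ` I i) (Fn h m a s))"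
      unfolding E_def ts case_prod_conv fe by (rule refl)
    also have "\<dots> = (\<Prod>i\<in>{1..4}. integral\<^sup>L lborel (\<lambda>z. indicator (I i) z *\<^sub>R Fn h m a s (z + tshift a s i)))"
      by (simp only: translate_set_integral)
    also have "\<dots> = integral\<^sup>L P (\<lambda>y. \<Prod>i\<in>{1..4}. indicator (I i) (y i) *\<^sub>R Fn h m a s (y i + tshift a s i))"
      unfolding P_def by (rule PS.product_integral_prod[symmetric]) (auto intro: IntF as)
    also have "\<dots> = integral\<^sup>L P (Psi t)"
      using t by (simp add: Psi_def ts)
    finally show ?thesis .
  qed

  have ybound: "norm (integral\<^sup>L Q (\<lambda>t. Psi t y)) \<le> Kc * B y" for y
  proof (cases "\<forall>i\<in>{1..4}. y i \<in> I i")
    case False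
    then obtain i where i: "i \<in> {1..4}" "y i \<notin> I i" by blast
    have "Psi t y = 0" for t
      unfolding Psi_def using i by (auto intro!: prod_zero bexI[of _ i])
    then show ?thesis using Kc0 B0[of y] by simp
  next
    case True
    define GG where "GG = (\<lambda>a s. \<Prod>i\<in>{1..4}. Gi h i a s (y i))"
    define c where "c = (\<Prod>i\<in>{1..4}. h (gidx i) (y i) * eph m (y i))"
    have n: "nice \<tau> (\<beta> + \<beta>) (\<lambda>a s. Gi h i a s (y i))" if "i \<in> {1..4}" for i
      using Gi_nice[OF tau beta intv C2 that] True that by blast
    have niceGG: "nice \<tau> (8 * \<beta>) GG"
    proof -
      have "nice \<tau> ((\<beta> + \<beta>) + (\<beta> + \<beta>) + (\<beta> + \<beta>) + (\<beta> + \<beta>))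
          (\<lambda>a s. Gi h 1 a s (y 1) * Gi h 2 a s (y 2) * Gi h 3 a s (y 3) * Gi h 4 a s (y 4))"
        by (intro nice_mult n) auto
      moreover have "(\<beta> + \<beta>) + (\<beta> + \<beta>) + (\<beta> + \<beta>) + (\<beta> + \<beta>) = 8 * \<beta>" by simp
      ultimately show ?thesis unfolding GG_def prod4 by simp
    qed
    have yI: "y 1 \<in> I 1" "y 2 \<in> I 2" "y 3 \<in> I 3" "y 4 \<in> I 4" using True by auto
    have PsiEq: "Psi (a, s) y = c * (indicator SQ (a, s) * (eph m a * (eph m s * GG a s)))" for a s
    proof -
      have "Psi (a, s) y = indicator SQ (a, s) * (Fn h m a s (y 1 + tshift a s 1) * Fn h m a s (y 2 + tshift a s 2)
          * Fn h m a s (y 3 + tshift a s 3) * Fn h m a s (y 4 + tshift a s 4))"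
        unfolding Psi_def prod4 using yI by simp
      also have "\<dots> = c * (indicator SQ (a, s) * (eph m a * (eph m s * GG a s)))"
      proof -
        have i14: "(1::nat) \<in> {1..4}" "(2::nat) \<in> {1..4}" "(3::nat) \<in> {1..4}" "(4::nat) \<in> {1..4}" by auto
        show ?thesis
          unfolding Fn_identity[OF i14(1)] Fn_identity[OF i14(2)] Fn_identity[OF i14(3)] Fn_identity[OF i14(4)]
          unfolding c_def GG_def prod4 ts1 ts2 ts3 ts4 g1 g2 g3 g4 eph_0
          by (simp add: mult_ac)
      qed
      finally show ?thesis .
    qed
    have "integral\<^sup>L Q (\<lambda>t. Psi t y) = integral\<^sup>L Q (\<lambda>t. c * (case t of (a, s) \<Rightarrow> indicator SQ (a, s) * (eph m a * (eph m s * GG a s))))"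
      by (intro Bochner_Integration.integral_cong refl) (auto simp: PsiEq split: prod.split)
    also have "\<dots> = c * integral\<^sup>L Q (\<lambda>(a, s). indicator SQ (a, s) * (eph m a * (eph m s * GG a s)))"
      by (rule integral_mult_right_zero)
    also have "integral\<^sup>L Q (\<lambda>(a, s). indicator SQ (a, s) * (eph m a * (eph m s * GG a s)))
       = of_real (1 / \<tau>) * (of_real (1 / \<tau>) * integral {0..\<tau>} (\<lambda>a. exp (- \<i> * complex_of_real (m * a)) *
            integral {0..\<tau>} (\<lambda>s. exp (- \<i> * complex_of_real (m * s)) * GG a s)))"
      unfolding Q_def U_def SQ_def eph_def by (rule conv[OF tau niceGG])
    finally have eqI: "integral\<^sup>L Q (\<lambda>t. Psi t y) = c * (of_real (1 / \<tau>) * (of_real (1 / \<tau>) * integral {0..\<tau>} (\<lambda>a. exp (- \<i> * complex_of_real (m * a)) *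
            integral {0..\<tau>} (\<lambda>s. exp (- \<i> * complex_of_real (m * s)) * GG a s))))" .
    have nc: "norm c = B y"
      unfolding c_def B_def prod4 using yI by (simp add: norm_mult)
    have oJ: "norm (integral {0..\<tau>} (\<lambda>a. exp (- \<i> * complex_of_real (m * a)) *
            integral {0..\<tau>} (\<lambda>s. exp (- \<i> * complex_of_real (m * s)) * GG a s)))
      \<le> pi / \<bar>m\<bar> * (pi / \<bar>m\<bar> * (1 + \<tau> * (8 * \<beta>) / 2) + \<tau> * (pi / \<bar>m\<bar> * (8 * \<beta> + \<tau> * (8 * \<beta>)\<^sup>2 / 2)) / 2)"
      by (rule osc2[OF tau m niceGG])
    have "norm (integral\<^sup>L Q (\<lambda>t. Psi t y)) = B y * ((1 / \<tau>) * ((1 / \<tau>) * norm (integral {0..\<tau>} (\<lambda>a. exp (- \<i> * complex_of_real (m * a)) *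
            integral {0..\<tau>} (\<lambda>s. exp (- \<i> * complex_of_real (m * s)) * GG a s)))))"
      unfolding eqI nc[symmetric] by (rule norm_aux[OF tau])
    also have "\<dots> \<le> B y * ((1 / \<tau>) * ((1 / \<tau>) * (pi / \<bar>m\<bar> * (pi / \<bar>m\<bar> * (1 + \<tau> * (8 * \<beta>) / 2) + \<tau> * (pi / \<bar>m\<bar> * (8 * \<beta> + \<tau> * (8 * \<beta>)\<^sup>2 / 2)) / 2))))"
      using tau B0[of y] oJ by (intro mult_left_mono) auto
    also have "\<dots> \<le> B y * Kc"
      unfolding Kc_def using arith_final[OF tau beta m] B0[of y] by (rule mult_left_mono)
    finally show ?thesis by (simp add: mult.commute)
  qed

  have main: "norm (integral\<^sup>L Q E) \<le> Kc * \<alpha> ^ 4"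
  proof (cases "integrable Q E")
    case False
    then show ?thesis using Kc0 alpha by (simp add: not_integrable_integral_eq)
  next
    case True
    have Emeas: "E \<in> borel_measurable Q" using True by (rule borel_measurable_integrable)
    have intF: "integrable Q (\<lambda>t. integral\<^sup>L P (Psi t))" by (rule QP.integrable_fst[OF PsiInt])
    have aeU: "AE x in U. x \<in> {0..\<tau>}" unfolding U_def by (rule AE_uniform_measureI) auto
    have aeSQ: "AE t in Q. t \<in> SQ" unfolding Q_def
    proof (rule UU.AE_pair_measure)
      show "{x \<in> space (U \<Otimes>\<^sub>M U). x \<in> SQ} \<in> sets (U \<Otimes>\<^sub>M U)"
        using SQmeas unfolding Q_def by (simp add: space_pair_measure)
      show "AE x in U. AE y in U. (x, y) \<in> SQ"
      proof (rule eventually_mono[OF aeU])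
        fix x assume x: "x \<in> {0..\<tau>}"
        show "AE y in U. (x, y) \<in> SQ" by (rule eventually_mono[OF aeU]) (use x in \<open>auto simp: SQ_def\<close>)
      qed
    qed
    have AEeq: "AE t in Q. E t = integral\<^sup>L P (Psi t)"
      by (rule eventually_mono[OF aeSQ]) (rule Eeq)
    have "integral\<^sup>L Q E = integral\<^sup>L Q (\<lambda>t. integral\<^sup>L P (Psi t))"
      by (rule integral_cong_AE[OF Emeas borel_measurable_integrable[OF intF] AEeq])
    also have "\<dots> = integral\<^sup>L P (\<lambda>y. integral\<^sup>L Q (\<lambda>t. Psi t y))"
      using QP.Fubini_integral[OF PsiInt] by simp
    finally have eqI: "integral\<^sup>L Q E = integral\<^sup>L P (\<lambda>y. integral\<^sup>L Q (\<lambda>t. Psi t y))" .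
    show ?thesis
    proof (cases "integrable P (\<lambda>y. integral\<^sup>L Q (\<lambda>t. Psi t y))")
      case False
      then show ?thesis using Kc0 alpha eqI by (simp add: not_integrable_integral_eq)
    next
      case True
      have "ennreal (norm (integral\<^sup>L Q E)) \<le> (\<integral>\<^sup>+ y. ennreal (norm (integral\<^sup>L Q (\<lambda>t. Psi t y))) \<partial>P)"
        unfolding eqI by (rule integral_norm_bound_ennreal[OF True])
      also have "\<dots> \<le> (\<integral>\<^sup>+ y. ennreal Kc * ennreal (B y) \<partial>P)"
        by (intro nn_integral_mono) (use ybound Kc0 B0 in \<open>auto simp: ennreal_mult[symmetric] intro: ennreal_leI\<close>)
      also have "\<dots> = ennreal Kc * (\<integral>\<^sup>+ y. ennreal (B y) \<partial>P)"
        by (rule nn_integral_cmult) (use BMeas in simp)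
      also have "\<dots> \<le> ennreal Kc * ennreal (\<alpha> ^ 4)"
        by (intro mult_left_mono KB) simp
      also have "\<dots> = ennreal (Kc * \<alpha> ^ 4)" using Kc0 alpha by (simp add: ennreal_mult)
      finally show ?thesis using Kc0 alpha by (subst (asm) ennreal_le_iff) auto
    qed
  qed
  have rhs: "Kc * \<alpha> ^ 4 = 25 * pi\<^sup>2 * \<alpha> ^ 4 / m\<^sup>2 * (max \<beta> (1 / \<tau>))\<^sup>2"
    by (simp add: Kc_def)
  show "norm (integral\<^sup>L (uniform_measure lborel {0..\<tau>} \<Otimes>\<^sub>M uniform_measure lborel {0..\<tau>})
            (\<lambda>(t1, t2). \<Prod>i\<in>{1..4::nat}.
               set_lebesgue_integral lborel ((\<lambda>x. x + tshift t1 t2 i) ` I i)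
                 (\<lambda>x. fprod h t1 t2 x * exp (- \<i> * complex_of_real (m * x)))))
      \<le> 25 * pi\<^sup>2 * \<alpha> ^ 4 / m\<^sup>2 * (max \<beta> (1 / \<tau>))\<^sup>2"
    using main unfolding rhs Q_def U_def E_def .
qed

end
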